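(* Consider the ARQ protocol without feedback described in the context. Let $\mathcal{T}^*_{\mathcal{P}_2}$ be the optimal value and $\Psi^*_{\mathcal{P}_2}$ an optimal policy of problem $\mathcal{P}_2$: maximize the throughput $\mathcal{T}(\Psi)$ over all admissible policies $\Psi$. If $\mathcal{T}^*_{\mathcal{P}_2}<\mathcal{T}_{\rm th}$, then problem $\mathcal{P}_1$ (minimize the packet drop probability $p_{\rm drop}(\Psi)$ over admissible policies subject to $\mathcal{T}(\Psi)\ge \mathcal{T}_{\rm th}$) is infeasible. Otherwise, $\Psi^*_{\mathcal{P}_2}$ is an optimal solution of $\mathcal{P}_1$.
   Context: System model. Time is slotted, $t=1,2,\dots$. The channel power gains $|h_t|^2$ are i.i.d. across slots with CDF $F_H$. A non-energy-harvesting transmitter sends packets at fixed rate $R$ and power $p_{\rm tx}$; let $|h_{\rm th}|^2=(2^R-1)/p_{\rm tx}$, $p_c=1-F_H(|h_{\rm th}|^2)$ and $\bar p_c=1-p_c$. Each packet may be transmitted at most $K>1$ times; $k_t\in\{0,1,\dots,K-1\}$ is the transmission index (the packet is in its $(k_t+1)$th transmission in slot $t$). The receiver harvests energy $E_{H,t}$ at the start of slot $t$, with $E_{H,t}$ i.i.d. taking values in a finite set of nonnegative integer multiples of an energy quantum $E$. Its battery level evolves as $b_{t+1}=\min\{b_t-E_{c,t}+E_{H,t+1},B_{\max}\}$, $b_1=E_{H,1}$, where $E_{c,t}$ is the energy consumed in slot $t$ and $B_{\max}$ is a finite multiple of $E$. Sampling a packet costs $E_{\rm s}$, decoding costs $E_{\rm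 d}$ (both positive multiples of $E$). In slot $t$ the receiver chooses $a_{s,t}\in\{0,1\}$ (sample or not). If it samples, it consumes $E_{\rm s}$; if moreover $|h_t|^2\ge|h_{\rm th}|^2$ (probability $p_c$, independently of the past), it decodes the packet correctly and consumes an additional $E_{\rm d}$; otherwise the sample is discarded with no further energy cost. The reception state $i_t\in\{0,1\}$ equals $1$ iff the packet currently being transmitted has already been decoded correctly. The system state is $\mathbf{s}_t=(b_t,k_t,i_t)$. ARQ without feedback: no acknowledgement is ever sent, so the transmitter starts a new packet every $K$ slots ($k_{t+1}=(k_t+1)\bmod K$, and $i_{t+1}=0$ whenever $k_{t+1}=0$). Admissible actions: $a_{s,t}=1$ is allowed only if $i_t=0$ and $b_t\ge E_{\rm s}+E_{\rm d}$; otherwise $a_{s,t}=0$. A policy $\Psi$ chooses actions based on the system state. Performance metrics: let $S_t$ be the event that a packet is decoded correctly in slot $t$, $N_t$ the event that a new packet starts in slot $t$, and $D_t$ the event that a packet is dropped in slot $t$ (i.e., $k_t=K-1$ and the packet has not been decoded correctly by the end of slot $t$). Throughput: $\mathcal{T}(\Psi)=\lim_{T\to\infty}\frac1T\mathbb{E}[\sum_{t=1}^T\mathbf{1}_{S_t}]$. Packet drop probability: $p_{\rm drop}(\Psi)=\frac{\lim_{T\to\infty}\frac1T\mathbb{E}[\sum_{t=1}^T\mathbf{1}_{D_t}]}{\lim_{T\to\infty}\frac1T\mathbb{E}[\sum_{t=1}^T\mathbf{1}_{N_t}]}$, where the limits are assumed to exist. $\mathcal{T}_{\rm th}$ is a given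 throughput requirement. *)

theory Defs
  imports "HOL-Probability.Probability"
begin

text \<open>All energies are measured in units of the energy quantum E (so they are natural numbers).
  System state (b, k, i): battery level b, transmission index k in {0..K-1},
  reception state i (True iff the current packet has already been decoded correctly).\<close>

type_synonym arq_state = "nat \<times> nat \<times> bool"

text \<open>A (stationary, deterministic) policy maps the system state to the sampling action.\<close>
type_synonym arq_policy = "arq_state \<Rightarrow> bool"

definition is_cdf :: "(real \<Rightarrow> real) \<Rightarrow> bool" where
  "is_cdf F \<longleftrightarrow> mono F \<and> (\<forall>x. 0 \<le> F x \<and> F x \<le> 1)
     \<and> (\<forall>x. continuous (at_right x) F)
     \<and> (F \<longlongrightarrow> 0) at_bot \<and> (F \<longlongrightarrow> 1) at_top"

definition h_th :: "real \<Rightarrow> real \<Rightarrow> real" where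
  "h_th R ptx = (2 powr R - 1) / ptx"

definition p_c :: "(real \<Rightarrow> real) \<Rightarrow> real \<Rightarrow> real \<Rightarrow> real" where
  "p_c F R ptx = 1 - F (h_th R ptx)"

definition admissible :: "nat \<Rightarrow> nat \<Rightarrow> arq_policy \<Rightarrow> bool" where
  "admissible Es Ed \<Psi> \<longleftrightarrow>
     (\<forall>b k i. \<Psi> (b, k, i) \<longrightarrow> (\<not> i \<and> b \<ge> Es + Ed))"

text \<open>One slot: given the current state, returns the distribution of
  (next state, S_t, D_t), where S_t = packet decoded correctly in this slot,
  D_t = packet dropped in this slot.\<close>
definition arq_step ::
  "nat \<Rightarrow> real \<Rightarrow> nat pmf \<Rightarrow> nat \<Rightarrow> nat \<Rightarrow> nat \<Rightarrow> arq_policy \<Rightarrow> arq_state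
     \<Rightarrow> (arq_state \<times> bool \<times> bool) pmf" where
  "arq_step K pc EH Bmax Es Ed \<Psi> s =
     (case s of (b, k, i) \<Rightarrow>
       do {
         good \<leftarrow> bernoulli_pmf pc;
         eh \<leftarrow> EH;
         let a = \<Psi> (b, k, i);
         let succ = (a \<and> good);
         let Ec = (if a then (if good then Es + Ed else Es) else 0);
         let i' = (i \<or> succ);
         let k' = (k + 1) mod K;
         let i'' = (if k' = 0 then False else i');
         let b' = min (b - Ec + eh) Bmax;
         let drop = (k = K - 1 \<and> \<not> i');
         return_pmf ((b', k', i''), succ, drop)
       })"

text \<open>Distribution of the state in slot t+1 (b_1 = E_{H,1}, k_1 = 0, i_1 = 0).\<close>
fun arq_dist ::
  "nat \<Rightarrow> real \<Rightarrow> nat pmf \<Rightarrow> nat \<Rightarrow> nat \<Rightarrow> nat \<Rightarrow> arq_policy \<Rightarrow> nat \<Rightarrow> arq_state pmf" where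
  "arq_dist K pc EH Bmax Es Ed \<Psi> 0 = map_pmf (\<lambda>e. (e, 0, False)) EH"
| "arq_dist K pc EH Bmax Es Ed \<Psi> (Suc t) =
     map_pmf fst (bind_pmf (arq_dist K pc EH Bmax Es Ed \<Psi> t) (arq_step K pc EH Bmax Es Ed \<Psi>))"

definition arq_slot ::
  "nat \<Rightarrow> real \<Rightarrow> nat pmf \<Rightarrow> nat \<Rightarrow> nat \<Rightarrow> nat \<Rightarrow> arq_policy \<Rightarrow> nat
     \<Rightarrow> (arq_state \<times> (arq_state \<times> bool \<times> bool)) pmf" where
  "arq_slot K pc EH Bmax Es Ed \<Psi> t =
     bind_pmf (arq_dist K pc EH Bmax Es Ed \<Psi> t)
       (\<lambda>s. map_pmf (\<lambda>x. (s, x)) (arq_step K pc EH Bmax Es Ed \<Psi> s))"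

definition avg_S where
  "avg_S K pc EH Bmax Es Ed \<Psi> (n::nat) =
     (\<Sum>t<n. measure_pmf.prob (arq_slot K pc EH Bmax Es Ed \<Psi> t) {x. fst (snd (snd x))}) / real n"

definition avg_D where
  "avg_D K pc EH Bmax Es Ed \<Psi> (n::nat) =
     (\<Sum>t<n. measure_pmf.prob (arq_slot K pc EH Bmax Es Ed \<Psi> t) {x. snd (snd (snd x))}) / real n"

definition avg_N where
  "avg_N K pc EH Bmax Es Ed \<Psi> (n::nat) =
     (\<Sum>t<n. measure_pmf.prob (arq_slot K pc EH Bmax Es Ed \<Psi> t) {x. fst (snd (fst x)) = 0}) / real n"

definition throughput where
  "throughput K pc EH Bmax Es Ed \<Psi> = lim (avg_S K pc EH Bmax Es Ed \<Psi>)"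

definition p_drop where
  "p_drop K pc EH Bmax Es Ed \<Psi> =
     lim (avg_D K pc EH Bmax Es Ed \<Psi>) / lim (avg_N K pc EH Bmax Es Ed \<Psi>)"

definition P2_optimal where
  "P2_optimal K pc EH Bmax Es Ed \<Psi> \<longleftrightarrow> admissible Es Ed \<Psi> \<and>
     (\<forall>\<Phi>. admissible Es Ed \<Phi> \<longrightarrow>
        throughput K pc EH Bmax Es Ed \<Phi> \<le> throughput K pc EH Bmax Es Ed \<Psi>)"

definition P1_feasible where
  "P1_feasible K pc EH Bmax Es Ed Tth \<Psi> \<longleftrightarrow> admissible Es Ed \<Psi> \<and>
     throughput K pc EH Bmax Es Ed \<Psi> \<ge> Tth"

definition P1_optimal where
  "P1_optimal K pc EH Bmax Es Ed Tth \<Psi> \<longleftrightarrow> P1_feasible K pc EH Bmax Es Ed Tth \<Psi> \<and>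
     (\<forall>\<Phi>. P1_feasible K pc EH Bmax Es Ed Tth \<Phi> \<longrightarrow>
        p_drop K pc EH Bmax Es Ed \<Psi> \<le> p_drop K pc EH Bmax Es Ed \<Phi>)"

end

theory Submission
  imports Defs
begin


lemma step_support0:
  assumes "y \<in> set_pmf (arq_step K pc EH Bmax Es Ed \<Psi> (b,k,i))"
  shows "\<exists>g b'. y = ((b', (k+1) mod K, (if (k+1) mod K = 0 then False else (i \<or> (\<Psi> (b,k,i) \<and> g)))),
             \<Psi> (b,k,i) \<and> g, (k = K - 1 \<and> \<not> (i \<or> (\<Psi> (b,k,i) \<and> g))))"
  using assms unfolding arq_step_def by (auto simp: Let_def set_bind_pmf)

lemma step_support:
  assumes "y \<in> set_pmf (arq_step K pc EH Bmax Es Ed \<Psi> (b,k,i))"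
  shows "fst (snd (fst y)) = (k+1) mod K \<and> (fst (snd y) \<longrightarrow> \<Psi> (b,k,i))
    \<and> snd (snd (fst y)) = ((k+1) mod K \<noteq> 0 \<and> (i \<or> fst (snd y)))
    \<and> snd (snd y) = (k = K - 1 \<and> \<not> (i \<or> fst (snd y)))"
  using step_support0[OF assms] by (auto split: if_splits)

lemma dist_k:
  assumes "K > 0" "s \<in> set_pmf (arq_dist K pc EH Bmax Es Ed \<Psi> t)"
  shows "fst (snd s) = t mod K"
  using assms(2)
proof (induction t arbitrary: s)
  case 0 then show ?case by auto
next
  case (Suc t)
  then obtain s0 y where s0: "s0 \<in> set_pmf (arq_dist K pc EH Bmax Es Ed \<Psi> t)"
    and y: "y \<in> set_pmf (arq_step K pc EH Bmax Es Ed \<Psi> s0)" and s: "s = fst y"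
    by (auto simp: set_bind_pmf)
  obtain b k i where s0e: "s0 = (b,k,i)" by (cases s0) auto
  have "k = t mod K" using Suc.IH[OF s0] s0e by simp
  then show ?case using step_support[OF y[unfolded s0e]] s by (simp add: mod_Suc_eq)
qed

lemma em_ind: "emeasure (measure_pmf M) A = (\<integral>\<^sup>+x. indicator A x \<partial>measure_pmf M)"
  by simp

lemma ind_bool: "(indicator {x. P x} x :: ennreal) = (if P x then 1 else 0)"
  by (simp add: indicator_def)

lemma pointwise:
  assumes adm: "admissible Es Ed \<Psi>" and K: "K > 0" and kK: "k < K"
    and y: "y \<in> set_pmf (arq_step K pc EH Bmax Es Ed \<Psi> (b,k,i))"
  shows "(if fst (snd y) then 1 else 0) + (if snd (snd y) then 1 else 0) + (if i then 1 else 0)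
     = (if snd (snd (fst y)) then 1 else (0::ennreal)) + (if k = K - 1 then 1 else 0)"
proof -
  note ss = step_support[OF y]
  have a: "fst (snd y) \<Longrightarrow> \<not> i" using ss adm unfolding admissible_def by blast
  have m: "((k+1) mod K = 0) = (k = K - 1)"
    using K kK by (metis Suc_eq_plus1 Suc_pred less_Suc_eq mod_less mod_self not_less_eq zero_neq_one
        add_diff_inverse_nat less_one mod_Suc)
  show ?thesis using ss a m by (cases "fst (snd y)"; cases i; cases "k = K - 1"; simp)
qed

lemma step_identity:
  assumes adm: "admissible Es Ed \<Psi>" and K: "K > 0"
  shows "emeasure (arq_slot K pc EH Bmax Es Ed \<Psi> t) {x. fst (snd (snd x))}
       + emeasure (arq_slot K pc EH Bmax Es Ed \<Psi> t) {x. snd (snd (snd x))}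
       + emeasure (arq_dist K pc EH Bmax Es Ed \<Psi> t) {s. snd (snd s)}
     = emeasure (arq_dist K pc EH Bmax Es Ed \<Psi> (Suc t)) {s. snd (snd s)}
       + (if t mod K = K - 1 then 1 else 0)"
proof -
  define D where "D = arq_dist K pc EH Bmax Es Ed \<Psi> t"
  define st where "st = arq_step K pc EH Bmax Es Ed \<Psi>"
  have e1: "emeasure (arq_slot K pc EH Bmax Es Ed \<Psi> t) {x. P (snd x)}
      = (\<integral>\<^sup>+s. (\<integral>\<^sup>+y. (if P y then 1 else 0) \<partial>st s) \<partial>D)" for P
    unfolding arq_slot_def D_def st_def em_ind ind_bool by simp
  have e2: "emeasure (arq_dist K pc EH Bmax Es Ed \<Psi> (Suc t)) {s. Q s}
      = (\<integral>\<^sup>+s. (\<integral>\<^sup>+y. (if Q (fst y) then 1 else 0) \<partial>st s) \<partial>D)" for Q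
    unfolding D_def st_def em_ind ind_bool by simp
  have e3: "emeasure (measure_pmf D) {s. Q s} = (\<integral>\<^sup>+s. (if Q s then 1 else 0) \<partial>D)" for Q
    unfolding em_ind ind_bool by simp
  have pw: "(\<integral>\<^sup>+y. (if fst (snd y) then 1 else 0) \<partial>st s) + (\<integral>\<^sup>+y. (if snd (snd y) then 1 else 0) \<partial>st s)
       + (if snd (snd s) then 1 else 0)
     = (\<integral>\<^sup>+y. (if snd (snd (fst y)) then 1 else 0) \<partial>st s) + (if t mod K = K - 1 then 1 else (0::ennreal))"
    if sD: "s \<in> set_pmf D" for s
  proof -
    obtain b k i where se: "s = (b,k,i)" by (cases s) auto
    have kt: "k = t mod K" using dist_k[OF K sD[unfolded D_def]] se by simp
    have kK: "k < K" using kt K by simp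
    have c1: "(\<integral>\<^sup>+y. c \<partial>st s) = c" for c :: ennreal
      by (simp add: measure_pmf.emeasure_space_1)
    have "(\<integral>\<^sup>+y. (if fst (snd y) then 1 else 0) \<partial>st s) + (\<integral>\<^sup>+y. (if snd (snd y) then 1 else 0) \<partial>st s)
       + (if snd (snd s) then 1 else 0)
      = (\<integral>\<^sup>+y. (if fst (snd y) then 1 else 0) + (if snd (snd y) then 1 else 0) + (if i then 1 else (0::ennreal)) \<partial>st s)"
      by (simp add: nn_integral_add c1 se)
    also have "\<dots> = (\<integral>\<^sup>+y. (if snd (snd (fst y)) then 1 else 0) + (if k = K - 1 then 1 else (0::ennreal)) \<partial>st s)"
      apply (intro nn_integral_cong_AE AE_pmfI)
      using pointwise[OF adm K kK] se st_def by simp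
    also have "\<dots> = (\<integral>\<^sup>+y. (if snd (snd (fst y)) then 1 else 0) \<partial>st s) + (if t mod K = K - 1 then 1 else (0::ennreal))"
      by (simp add: nn_integral_add c1 kt)
    finally show ?thesis .
  qed
  have "emeasure (arq_slot K pc EH Bmax Es Ed \<Psi> t) {x. fst (snd (snd x))}
       + emeasure (arq_slot K pc EH Bmax Es Ed \<Psi> t) {x. snd (snd (snd x))}
       + emeasure (arq_dist K pc EH Bmax Es Ed \<Psi> t) {s. snd (snd s)}
    = (\<integral>\<^sup>+s. (\<integral>\<^sup>+y. (if fst (snd y) then 1 else 0) \<partial>st s) + (\<integral>\<^sup>+y. (if snd (snd y) then 1 else 0) \<partial>st s)
       + (if snd (snd s) then 1 else 0) \<partial>D)"
    using e1[of "\<lambda>y. fst (snd y)"] e1[of "\<lambda>y. snd (snd y)"] e3[of "\<lambda>s. snd (snd s)"]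
    by (simp add: nn_integral_add D_def)
  also have "\<dots> = (\<integral>\<^sup>+s. (\<integral>\<^sup>+y. (if snd (snd (fst y)) then 1 else 0) \<partial>st s) + (if t mod K = K - 1 then 1 else (0::ennreal)) \<partial>D)"
    by (intro nn_integral_cong_AE AE_pmfI) (use pw in simp)
  also have "\<dots> = emeasure (arq_dist K pc EH Bmax Es Ed \<Psi> (Suc t)) {s. snd (snd s)}
       + (if t mod K = K - 1 then 1 else 0)"
    using e2[of "\<lambda>s. snd (snd s)"] by (simp add: nn_integral_add measure_pmf.emeasure_space_1)
  finally show ?thesis .
qed

lemma real_identity:
  assumes adm: "admissible Es Ed \<Psi>" and K: "K > 0"
  shows "measure_pmf.prob (arq_slot K pc EH Bmax Es Ed \<Psi> t) {x. fst (snd (snd x))}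
       + measure_pmf.prob (arq_slot K pc EH Bmax Es Ed \<Psi> t) {x. snd (snd (snd x))}
       + measure_pmf.prob (arq_dist K pc EH Bmax Es Ed \<Psi> t) {s. snd (snd s)}
     = measure_pmf.prob (arq_dist K pc EH Bmax Es Ed \<Psi> (Suc t)) {s. snd (snd s)}
       + (if t mod K = K - 1 then 1 else 0)"
proof -
  have "ennreal (measure_pmf.prob (arq_slot K pc EH Bmax Es Ed \<Psi> t) {x. fst (snd (snd x))}
       + measure_pmf.prob (arq_slot K pc EH Bmax Es Ed \<Psi> t) {x. snd (snd (snd x))}
       + measure_pmf.prob (arq_dist K pc EH Bmax Es Ed \<Psi> t) {s. snd (snd s)})
     = ennreal (measure_pmf.prob (arq_dist K pc EH Bmax Es Ed \<Psi> (Suc t)) {s. snd (snd s)}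
       + (if t mod K = K - 1 then 1 else 0))"
    using step_identity[OF adm K, of pc EH Bmax t]
    unfolding measure_pmf.emeasure_eq_measure
    by (subst ennreal_plus; (subst ennreal_plus)?; simp)+
  then show ?thesis by (subst (asm) ennreal_inj) auto
qed

lemma f0: "measure_pmf.prob (arq_dist K pc EH Bmax Es Ed \<Psi> 0) {s. snd (snd s)} = 0"
  by (subst measure_pmf_zero_iff) auto

lemma sum_identity:
  assumes adm: "admissible Es Ed \<Psi>" and K: "K > 0"
  shows "(\<Sum>t<n. measure_pmf.prob (arq_slot K pc EH Bmax Es Ed \<Psi> t) {x. fst (snd (snd x))})
       + (\<Sum>t<n. measure_pmf.prob (arq_slot K pc EH Bmax Es Ed \<Psi> t) {x. snd (snd (snd x))})
     = measure_pmf.prob (arq_dist K pc EH Bmax Es Ed \<Psi> n) {s. snd (snd s)}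
       + (\<Sum>t<n. (if t mod K = K - 1 then 1 else 0))"
proof (induction n)
  case 0 then show ?case by (simp add: f0)
next
  case (Suc n)
  then show ?case using real_identity[OF adm K, of pc EH Bmax n] by simp
qed

lemma slot_support: "x \<in> set_pmf (arq_slot K pc EH Bmax Es Ed \<Psi> t) \<Longrightarrow> fst x \<in> set_pmf (arq_dist K pc EH Bmax Es Ed \<Psi> t)"
  unfolding arq_slot_def by (auto simp: set_bind_pmf)

lemma PN:
  assumes K: "K > 0"
  shows "measure_pmf.prob (arq_slot K pc EH Bmax Es Ed \<Psi> t) {x. fst (snd (fst x)) = 0}
     = (if t mod K = 0 then 1 else 0)"
proof (cases "t mod K = 0")
  case True
  have "measure_pmf.prob (arq_slot K pc EH Bmax Es Ed \<Psi> t) {x. fst (snd (fst x)) = 0} = 1"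
    apply (subst measure_pmf.prob_eq_1)
     apply simp
    apply (rule AE_pmfI)
    using dist_k[OF K slot_support] True by simp
  then show ?thesis using True by simp
next
  case False
  have "measure_pmf.prob (arq_slot K pc EH Bmax Es Ed \<Psi> t) {x. fst (snd (fst x)) = 0} = 0"
    apply (subst measure_pmf_zero_iff)
    using dist_k[OF K slot_support] False by auto
  then show ?thesis using False by simp
qed

lemma avg_sum:
  assumes adm: "admissible Es Ed \<Psi>" and K: "K > 0"
  shows "avg_S K pc EH Bmax Es Ed \<Psi> n + avg_D K pc EH Bmax Es Ed \<Psi> n
     = measure_pmf.prob (arq_dist K pc EH Bmax Es Ed \<Psi> n) {s. snd (snd s)} / real n
       + (\<Sum>t<n. (if t mod K = K - 1 then 1 else 0)) / real n"
  unfolding avg_S_def avg_D_def add_divide_distrib[symmetric] using sum_identity[OF adm K] by simp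

lemma avgN_eq:
  assumes K: "K > 0"
  shows "avg_N K pc EH Bmax Es Ed \<Psi> = (\<lambda>n. (\<Sum>t<n. (if t mod K = 0 then 1 else 0)) / real n)"
  unfolding avg_N_def using PN[OF K] by simp

lemma limD:
  assumes adm: "admissible Es Ed \<Psi>" and K: "K > 0"
    and cS: "convergent (avg_S K pc EH Bmax Es Ed \<Psi>)" and cD: "convergent (avg_D K pc EH Bmax Es Ed \<Psi>)"
  shows "lim (avg_D K pc EH Bmax Es Ed \<Psi>)
     = lim (\<lambda>n. (\<Sum>t<n. (if t mod K = K - 1 then 1 else 0)) / real n) - throughput K pc EH Bmax Es Ed \<Psi>"
proof -
  define f where "f n = measure_pmf.prob (arq_dist K pc EH Bmax Es Ed \<Psi> n) {s. snd (snd s)} / real n" for n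
  define c where "c n = (\<Sum>t<n. (if t mod K = K - 1 then 1 else 0)) / (real n :: real)" for n
  have f0: "f \<longlonglongrightarrow> 0"
  proof (rule real_tendsto_sandwich[where f="\<lambda>n. 0" and h="\<lambda>n. 1 / real n"])
    show "\<forall>\<^sub>F n in sequentially. 0 \<le> f n" by (auto simp: f_def)
    show "\<forall>\<^sub>F n in sequentially. f n \<le> 1 / real n"
      by (auto simp: f_def divide_right_mono)
    show "(\<lambda>n. 1 / real n) \<longlonglongrightarrow> 0" by (rule lim_const_over_n)
  qed auto
  have S: "avg_S K pc EH Bmax Es Ed \<Psi> \<longlonglongrightarrow> throughput K pc EH Bmax Es Ed \<Psi>"
    using cS unfolding throughput_def by (simp add: convergent_LIMSEQ_iff)
  have D: "avg_D K pc EH Bmax Es Ed \<Psi> \<longlonglongrightarrow> lim (avg_D K pc EH Bmax Es Ed \<Psi>)"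
    using cD by (simp add: convergent_LIMSEQ_iff)
  have eq: "c n = avg_S K pc EH Bmax Es Ed \<Psi> n + avg_D K pc EH Bmax Es Ed \<Psi> n - f n" for n
    using avg_sum[OF adm K] unfolding f_def c_def by simp
  have "c \<longlonglongrightarrow> throughput K pc EH Bmax Es Ed \<Psi> + lim (avg_D K pc EH Bmax Es Ed \<Psi>) - 0"
    unfolding eq by (intro tendsto_intros S D f0)
  then have "lim c = throughput K pc EH Bmax Es Ed \<Psi> + lim (avg_D K pc EH Bmax Es Ed \<Psi>)"
    by (simp add: limI)
  then show ?thesis unfolding c_def by simp
qed

theorem lemma1:
  fixes K Bmax Es Ed :: nat and EH :: "nat pmf" and F :: "real \<Rightarrow> real"
    and R ptx Tth :: real and \<Psi>opt :: arq_policy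
  assumes "K > 1" and "Es > 0" and "Ed > 0" and "finite (set_pmf EH)"
    and "ptx > 0" and "is_cdf F"
    and limits: "\<And>\<Psi>. admissible Es Ed \<Psi> \<Longrightarrow>
          convergent (avg_S K (p_c F R ptx) EH Bmax Es Ed \<Psi>)
        \<and> convergent (avg_D K (p_c F R ptx) EH Bmax Es Ed \<Psi>)
        \<and> convergent (avg_N K (p_c F R ptx) EH Bmax Es Ed \<Psi>)"
    and opt2: "P2_optimal K (p_c F R ptx) EH Bmax Es Ed \<Psi>opt"
  shows "(throughput K (p_c F R ptx) EH Bmax Es Ed \<Psi>opt < Tth \<longrightarrow>
            \<not> (\<exists>\<Psi>. P1_feasible K (p_c F R ptx) EH Bmax Es Ed Tth \<Psi>))
       \<and> (\<not> throughput K (p_c F R ptx) EH Bmax Es Ed \<Psi>opt < Tth \<longrightarrow>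
            P1_optimal K (p_c F R ptx) EH Bmax Es Ed Tth \<Psi>opt)"
proof -
  define pc where "pc = p_c F R ptx"
  have K: "K > 0" using assms(1) by simp
  define L where "L = lim (\<lambda>n. (\<Sum>t<n. (if t mod K = K - 1 then 1 else 0)) / (real n :: real))"
  define N where "N = lim (\<lambda>n. (\<Sum>t<n. (if t mod K = 0 then 1 else 0)) / (real n :: real))"
  have admo: "admissible Es Ed \<Psi>opt" using opt2 unfolding P2_optimal_def by blast
  have Tle: "admissible Es Ed \<Phi> \<Longrightarrow> throughput K pc EH Bmax Es Ed \<Phi> \<le> throughput K pc EH Bmax Es Ed \<Psi>opt" for \<Phi>
    using opt2 unfolding P2_optimal_def pc_def by blast
  have pd: "admissible Es Ed \<Phi> \<Longrightarrow> p_drop K pc EH Bmax Es Ed \<Phi> = (L - throughput K pc EH Bmax Es Ed \<Phi>) / N" for \<Phi>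
    unfolding p_drop_def L_def N_def using limD[OF _ K, where \<Psi>=\<Phi> and pc=pc and EH=EH and Bmax=Bmax] limits[of \<Phi>] avgN_eq[OF K]
    unfolding pc_def by simp
  have N0: "N \<ge> 0"
  proof -
    have cN: "convergent (\<lambda>n. (\<Sum>t<n. (if t mod K = 0 then 1 else 0)) / (real n :: real))"
      using limits[OF admo] avgN_eq[OF K] by metis
    show ?thesis unfolding N_def
      by (rule LIMSEQ_le_const[OF cN[unfolded convergent_LIMSEQ_iff]]) (auto intro!: sum_nonneg divide_nonneg_nonneg)
  qed
  show ?thesis
    unfolding pc_def[symmetric]
  proof (intro conjI impI)
    assume "throughput K pc EH Bmax Es Ed \<Psi>opt < Tth"
    then show "\<not> (\<exists>\<Psi>. P1_feasible K pc EH Bmax Es Ed Tth \<Psi>)"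
      using Tle unfolding P1_feasible_def by force
  next
    assume "\<not> throughput K pc EH Bmax Es Ed \<Psi>opt < Tth"
    then show "P1_optimal K pc EH Bmax Es Ed Tth \<Psi>opt"
      unfolding P1_optimal_def P1_feasible_def
      using admo Tle pd N0 by (auto intro!: divide_right_mono)
  qed
qed

end
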